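(* Let $\mathfrak L_1,\dots,\mathfrak L_n,\mathfrak L$ be complete lattices, let $(\mathcal F_\alpha)_{\alpha\in\mathcal O}$ with $\mathcal F_\alpha:\mathfrak L_1\times\dots\times\mathfrak L_n\to(\mathfrak L\to^+\mathfrak L)$ be a family that is $\liminf$-pullable in all arguments, and let $\phi:\mathcal O\to\mathcal O$ be monotone. Then for every nonzero limit ordinal $\lambda\in\mathcal O$ and all $\mathcal G_i:\mathcal O\to\mathfrak L_i$ ($i=1,\dots,n$), $$\mu^{\liminf_\lambda\phi}\big(\mathcal F_\lambda(\liminf_\lambda\vec{\mathcal G})\big)\sqsubseteq\liminf_{\alpha\to\lambda}\mu^{\phi(\alpha)}\big(\mathcal F_\alpha(\vec{\mathcal G}_\alpha)\big).$$ If moreover $\phi$ is lower semi-continuous (i.e. $\phi(\lambda)\le\liminf_\lambda\phi$ for all nonzero limits $\lambda$), then even $$\mu^{\phi(\lambda)}\big(\mathcal F_\lambda(\liminf_\lambda\vec{\mathcal G})\big)\sqsubseteq\liminf_{\alpha\to\lambda}\mu^{\phi(\alpha)}\big(\mathcal F_\alpha(\vec{\mathcal G}_\alpha)\big).$$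
   Context: $\mathcal O$ is the set of ordinals $\le\top_{\mathsf{ord}}$ for a fixed ordinal $\top_{\mathsf{ord}}$ ($=\beth_\omega$). For $g:\mathcal O\to\mathfrak L$ into a complete lattice and a nonzero limit $\lambda$: $\liminf_\lambda g=\liminf_{\alpha\to\lambda}g(\alpha)=\sup_{\alpha_0<\lambda}\inf_{\alpha_0\le\alpha<\lambda}g(\alpha)$, $\limsup_{\alpha\to\lambda}g(\alpha)=\inf_{\alpha_0<\lambda}\sup_{\alpha_0\le\alpha<\lambda}g(\alpha)$; on products, componentwise. $\mathfrak L\to^+\mathfrak L$ = monotone maps. For $f:\mathfrak L\to\mathfrak L$, $g\in\mathfrak L$: $f^0(g)=g$, $f^{\alpha+1}(g)=f(f^\alpha(g))$, $f^\lambda(g)=\limsup_{\alpha\to\lambda}f^\alpha(g)$; $\mu^\alpha f:=f^\alpha(\bot)$. A family $(\mathcal F_\alpha)_{\alpha\in\mathcal O}$ of maps $\mathfrak K\to\mathfrak K'$ is $\liminf$-pullable if for all $\mathcal G:\mathcal O\to\mathfrak K$ and nonzero limits $\lambda$: $\mathcal F_\gamma(\liminf_{\alpha\to\lambda}\mathcal G_\alpha)\sqsubseteq\liminf_{\alpha\to\lambda}\mathcal F_\gamma(\mathcal G_\alpha)$ for all $\gamma\in\mathcal O$, and $\mathcal F_\lambda(\liminf_{\alpha\to\lambda}\mathcal G_\alpha)\sqsubseteq\liminf_{\alpha\to\lambda}\mathcal F_\alpha(\mathcal G_\alpha)$. "$\liminf$-pullable in all arguments" means the family $(\vec{\mathcal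 G},\mathcal X)\mapsto\mathcal F_\alpha(\vec{\mathcal G})(\mathcal X)$ is $\liminf$-pullable. *)

theory Defs
  imports Main "HOL-Library.Product_Order"
begin

text \<open>The ordinals O = [0, top_ord] are modelled by an arbitrary type 'o that is
  both a well-order and a complete linear order (i.e. a well-order with a greatest
  element); bot is the ordinal 0 and top is top_ord.\<close>

definition is_succ :: "'o::wellorder \<Rightarrow> bool" where
  "is_succ a \<longleftrightarrow> (\<exists>b<a. \<forall>c<a. c \<le> b)"

definition ord_pred :: "'o::wellorder \<Rightarrow> 'o" where
  "ord_pred a = (GREATEST b. b < a)"

definition nonzero_limit :: "'o::{wellorder,complete_linorder} \<Rightarrow> bool" where
  "nonzero_limit l \<longleftrightarrow> bot < l \<and> \<not> is_succ l"

definition ord_liminf :: "'o::wellorder \<Rightarrow> ('o \<Rightarrow> 'a::complete_lattice) \<Rightarrow> 'a" where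
  "ord_liminf l g = (SUP a0\<in>{..<l}. INF a\<in>{a0..<l}. g a)"

definition ord_limsup :: "'o::wellorder \<Rightarrow> ('o \<Rightarrow> 'a::complete_lattice) \<Rightarrow> 'a" where
  "ord_limsup l g = (INF a0\<in>{..<l}. SUP a\<in>{a0..<l}. g a)"

definition ord_iter :: "('a::complete_lattice \<Rightarrow> 'a) \<Rightarrow> 'a \<Rightarrow> 'o::{wellorder,complete_linorder} \<Rightarrow> 'a" where
  "ord_iter f g = wfrec {(x, y). x < y}
     (\<lambda>r a. if a = bot then g else if is_succ a then f (r (ord_pred a)) else ord_limsup a r)"

definition ord_mu :: "'o::{wellorder,complete_linorder} \<Rightarrow> ('a::complete_lattice \<Rightarrow> 'a) \<Rightarrow> 'a" where
  "ord_mu a f = ord_iter f bot a"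

definition liminf_pullable ::
  "('o::{wellorder,complete_linorder} \<Rightarrow> 'a::complete_lattice \<Rightarrow> 'b::complete_lattice) \<Rightarrow> bool" where
  "liminf_pullable F \<longleftrightarrow>
     (\<forall>G l. nonzero_limit l \<longrightarrow>
        (\<forall>c. F c (ord_liminf l G) \<le> ord_liminf l (\<lambda>a. F c (G a))) \<and>
        F l (ord_liminf l G) \<le> ord_liminf l (\<lambda>a. F a (G a)))"

end

theory Submission
  imports Defs
begin

lemma wf_lt: "wf {(x, y::'o::wellorder). x < y}"
  by (rule wf)

lemma ord_pred_props:
  assumes "is_succ (a::'o::wellorder)"
  shows "ord_pred a < a" "\<And>c. c < a \<Longrightarrow> c \<le> ord_pred a"
proof -
  obtain b where b: "b < a" "\<forall>c<a. c \<le> b" using assms unfolding is_succ_def by blast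
  have "ord_pred a = b" unfolding ord_pred_def
    by (rule Greatest_equality) (use b in auto)
  then show "ord_pred a < a" "\<And>c. c < a \<Longrightarrow> c \<le> ord_pred a" using b by auto
qed

lemma limsup_cong:
  assumes "\<And>z. z < a \<Longrightarrow> f z = g z"
  shows "ord_limsup a f = ord_limsup a g"
  unfolding ord_limsup_def
  by (rule INF_cong[OF refl], rule SUP_cong) (auto intro: assms)

lemma iter_eq:
  "ord_iter f g a = (if a = bot then g else if is_succ a then f (ord_iter f g (ord_pred a))
      else ord_limsup a (ord_iter f g))"
proof -
  have "ord_iter f g a = (\<lambda>r a. if a = bot then g else if is_succ a then f (r (ord_pred a)) else ord_limsup a r)
     (cut (ord_iter f g) {(x, y). x < y} a) a"
    unfolding ord_iter_def by (rule wfrec[OF wf_lt])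
  also have "\<dots> = (if a = bot then g else if is_succ a then f (ord_iter f g (ord_pred a))
      else ord_limsup a (ord_iter f g))"
    using ord_pred_props(1)[of a]
    by (auto simp: cut_apply intro!: limsup_cong)
  finally show ?thesis .
qed

lemma mu_eq:
  "ord_mu a f = (if a = bot then bot else if is_succ a then f (ord_mu (ord_pred a) f)
      else ord_limsup a (\<lambda>d. ord_mu d f))"
  unfolding ord_mu_def by (rule iter_eq)

lemma limsup_incr:
  fixes x :: "'o::{wellorder,complete_linorder} \<Rightarrow> 'a::complete_lattice"
  assumes "bot < a" "\<And>d e. d \<le> e \<Longrightarrow> e < a \<Longrightarrow> x d \<le> x e"
  shows "ord_limsup a x = (SUP d\<in>{..<a}. x d)"
proof -
  have "(SUP d\<in>{a0..<a}. x d) = (SUP d\<in>{..<a}. x d)" if "a0 < a" for a0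
  proof (rule antisym)
    show "(SUP d\<in>{a0..<a}. x d) \<le> (SUP d\<in>{..<a}. x d)" by (rule SUP_subset_mono) auto
    show "(SUP d\<in>{..<a}. x d) \<le> (SUP d\<in>{a0..<a}. x d)"
    proof (rule SUP_least)
      fix d assume d: "d \<in> {..<a}"
      show "x d \<le> (SUP d\<in>{a0..<a}. x d)"
      proof (cases "a0 \<le> d")
        case True then show ?thesis using d by (intro SUP_upper) auto
      next
        case False
        then have "x d \<le> x a0" using assms(2) that by auto
        also have "\<dots> \<le> (SUP d\<in>{a0..<a}. x d)" using that by (intro SUP_upper) auto
        finally show ?thesis .
      qed
    qed
  qed
  then have "ord_limsup a x = (INF a0\<in>{..<a}. (SUP d\<in>{..<a}. x d))"
    unfolding ord_limsup_def by (intro INF_cong) auto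
  also have "\<dots> = (SUP d\<in>{..<a}. x d)" using assms(1) by (subst INF_constant) auto
  finally show ?thesis .
qed

lemma mu_incr_aux:
  assumes f: "mono f"
  shows "(\<forall>d<c. ord_mu d f \<le> ord_mu (c::'o::{wellorder,complete_linorder}) f) \<and> ord_mu c f \<le> f (ord_mu c f)"
proof (induction c rule: less_induct)
  case (less c)
  show ?case
  proof (cases "c = bot")
    case True
    have "ord_mu c f = bot" using True by (subst mu_eq) simp
    then show ?thesis using True by (simp add: bot_less)
  next
    case nb: False
    show ?thesis
    proof (cases "is_succ c")
      case True
      let ?b = "ord_pred c"
      have bc: "?b < c" using ord_pred_props(1)[OF True] .
      have e: "ord_mu c f = f (ord_mu ?b f)" using nb True by (simp add: mu_eq[of c])
      have bb: "ord_mu ?b f \<le> ord_mu c f" using less.IH[OF bc] e by simp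
      have "ord_mu d f \<le> ord_mu c f" if "d < c" for d
      proof (cases "d = ?b")
        case True then show ?thesis using bb by simp
      next
        case False
        then have "d < ?b" using ord_pred_props(2)[OF \<open>is_succ c\<close> that] by simp
        then show ?thesis using less.IH[OF bc] bb by (meson order_trans)
      qed
      moreover have "ord_mu c f \<le> f (ord_mu c f)" using e bb f by (simp add: monoD)
      ultimately show ?thesis by blast
    next
      case False
      have inc: "\<And>d e. d \<le> e \<Longrightarrow> e < c \<Longrightarrow> ord_mu d f \<le> ord_mu e f"
        using less.IH by (metis order.order_iff_strict)
      have e: "ord_mu c f = (SUP d\<in>{..<c}. ord_mu d f)"
      proof -
        have "ord_mu c f = ord_limsup c (\<lambda>d. ord_mu d f)" using nb False by (simp add: mu_eq[of c])
        also have "\<dots> = (SUP d\<in>{..<c}. ord_mu d f)"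
          using nb by (intro limsup_incr inc) (auto simp: bot_less)
        finally show ?thesis .
      qed
      have up: "ord_mu d f \<le> ord_mu c f" if "d < c" for d
        using that e by (auto intro: SUP_upper)
      have "ord_mu c f \<le> f (ord_mu c f)"
        unfolding e[symmetric]
        apply (subst e)
        apply (rule SUP_least)
        using less.IH up f by (meson lessThan_iff monoD order_trans)
      then show ?thesis using up by blast
    qed
  qed
qed

lemma mu_mono_ord:
  assumes "mono f" "d \<le> c"
  shows "ord_mu d f \<le> ord_mu (c::'o::{wellorder,complete_linorder}) f"
  using mu_incr_aux[OF assms(1), of c] assms(2) by (cases "d = c") auto

lemma mu_limit:
  assumes "mono f" "c \<noteq> bot" "\<not> is_succ c"
  shows "ord_mu (c::'o::{wellorder,complete_linorder}) f = (SUP d\<in>{..<c}. ord_mu d f)"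
proof -
  have "ord_mu c f = ord_limsup c (\<lambda>d. ord_mu d f)" using assms(2,3) by (simp add: mu_eq[of c])
  also have "\<dots> = (SUP d\<in>{..<c}. ord_mu d f)"
    using assms(2) by (intro limsup_incr mu_mono_ord[OF assms(1)]) (auto simp: bot_less)
  finally show ?thesis .
qed

lemma liminf_prod:
  "ord_liminf l (\<lambda>a. (G a, H a)) = (ord_liminf l G, ord_liminf l H)"
  unfolding ord_liminf_def by (rule prod_eqI) (simp_all add: fst_SUP snd_SUP fst_INF snd_INF)

lemma liminf_mono_ev:
  fixes f g :: "'o::wellorder \<Rightarrow> 'a::complete_lattice"
  assumes "a0 < l" "\<And>a. a0 \<le> a \<Longrightarrow> a < l \<Longrightarrow> f a \<le> g a"
  shows "ord_liminf l f \<le> ord_liminf l g"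
  unfolding ord_liminf_def
proof (rule SUP_least)
  fix b0 assume b0: "b0 \<in> {..<l}"
  let ?m = "max a0 b0"
  have "(INF a\<in>{b0..<l}. f a) \<le> (INF a\<in>{?m..<l}. f a)" by (rule INF_superset_mono) auto
  also have "\<dots> \<le> (INF a\<in>{?m..<l}. g a)" using assms(2) by (intro INF_mono) (metis atLeastLessThan_iff max.bounded_iff order_refl)
  also have "\<dots> \<le> (SUP a0\<in>{..<l}. INF a\<in>{a0..<l}. g a)"
    using assms(1) b0 by (intro SUP_upper) auto
  finally show "(INF a\<in>{b0..<l}. f a) \<le> (SUP a0\<in>{..<l}. INF a\<in>{a0..<l}. g a)" .
qed

lemma lemmaA:
  fixes F :: "'o::{wellorder,complete_linorder} \<Rightarrow> 'k::complete_lattice \<Rightarrow> 'l::complete_lattice \<Rightarrow> 'l"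
  assumes F_mono: "\<And>a x. mono (F a x)"
    and pull: "liminf_pullable (\<lambda>a (x, X). F a x X)"
    and lim: "nonzero_limit lam"
  shows "ord_mu c (F lam (ord_liminf lam G)) \<le> ord_liminf lam (\<lambda>a. ord_mu c (F a (G a)))"
proof (induction c rule: less_induct)
  case (less c)
  show ?case
  proof (cases "c = bot")
    case True
    have "ord_mu c (F lam (ord_liminf lam G)) = bot" using True by (subst mu_eq) simp
    then show ?thesis by simp
  next
    case nb: False
    show ?thesis
    proof (cases "is_succ c")
      case True
      let ?b = "ord_pred c"
      let ?y = "\<lambda>a. ord_mu ?b (F a (G a))"
      have bc: "?b < c" using ord_pred_props(1)[OF True] .
      have "ord_mu c (F lam (ord_liminf lam G)) = F lam (ord_liminf lam G) (ord_mu ?b (F lam (ord_liminf lam G)))"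
        using nb True by (simp add: mu_eq[of c])
      also have "\<dots> \<le> F lam (ord_liminf lam G) (ord_liminf lam ?y)"
        using less.IH[OF bc] F_mono by (simp add: monoD)
      also have "\<dots> \<le> ord_liminf lam (\<lambda>a. F a (G a) (?y a))"
        using pull lim unfolding liminf_pullable_def
        by (drule_tac x="\<lambda>a. (G a, ?y a)" in spec) (simp add: liminf_prod)
      also have "\<dots> = ord_liminf lam (\<lambda>a. ord_mu c (F a (G a)))"
        using nb True by (simp add: mu_eq[of c])
      finally show ?thesis .
    next
      case False
      have "ord_mu c (F lam (ord_liminf lam G)) = (SUP d\<in>{..<c}. ord_mu d (F lam (ord_liminf lam G)))"
        using nb False F_mono by (intro mu_limit) auto
      also have "\<dots> \<le> ord_liminf lam (\<lambda>a. ord_mu c (F a (G a)))"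
      proof (rule SUP_least)
        fix d assume d: "d \<in> {..<c}"
        have "ord_mu d (F lam (ord_liminf lam G)) \<le> ord_liminf lam (\<lambda>a. ord_mu d (F a (G a)))"
          using less.IH d by auto
        also have "\<dots> \<le> ord_liminf lam (\<lambda>a. ord_mu c (F a (G a)))"
          using lim d F_mono unfolding nonzero_limit_def
          by (intro liminf_mono_ev[of bot] mu_mono_ord) auto
        finally show "ord_mu d (F lam (ord_liminf lam G)) \<le> ord_liminf lam (\<lambda>a. ord_mu c (F a (G a)))" .
      qed
      finally show ?thesis .
    qed
  qed
qed

theorem theorem4p18:
  fixes F :: "'o::{wellorder,complete_linorder} \<Rightarrow> 'k::complete_lattice \<Rightarrow> 'l::complete_lattice \<Rightarrow> 'l"
    and phi :: "'o \<Rightarrow> 'o"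
    and G :: "'o \<Rightarrow> 'k"
    and lam :: 'o
  assumes F_mono: "\<And>a x. mono (F a x)"
    and pull: "liminf_pullable (\<lambda>a (x, X). F a x X)"
    and phi_mono: "mono phi"
    and lim: "nonzero_limit lam"
  shows "ord_mu (ord_liminf lam phi) (F lam (ord_liminf lam G))
           \<le> ord_liminf lam (\<lambda>a. ord_mu (phi a) (F a (G a)))
         \<and> ((\<forall>l. nonzero_limit l \<longrightarrow> phi l \<le> ord_liminf l phi) \<longrightarrow>
         ord_mu (phi lam) (F lam (ord_liminf lam G))
           \<le> ord_liminf lam (\<lambda>a. ord_mu (phi a) (F a (G a))))"
proof -
  define L where "L = F lam (ord_liminf lam G)"
  define R where "R = ord_liminf lam (\<lambda>a. ord_mu (phi a) (F a (G a)))"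
  define \<beta> where "\<beta> = ord_liminf lam phi"
  have lamb: "bot < lam" using lim unfolding nonzero_limit_def by simp
  have betaeq: "\<beta> = (SUP a\<in>{..<lam}. phi a)"
    unfolding \<beta>_def ord_liminf_def
  proof (rule SUP_cong[OF refl])
    fix a0 assume "a0 \<in> {..<lam}"
    then show "(INF a\<in>{a0..<lam}. phi a) = phi a0"
      by (intro antisym INF_lower INF_greatest) (auto intro: monoD[OF phi_mono])
  qed
  have B: "ord_mu d L \<le> R" if "a0 < lam" "\<And>a. a0 \<le> a \<Longrightarrow> a < lam \<Longrightarrow> d \<le> phi a" for d a0
  proof -
    have "ord_mu d L \<le> ord_liminf lam (\<lambda>a. ord_mu d (F a (G a)))"
      unfolding L_def by (rule lemmaA[OF F_mono pull lim])
    also have "\<dots> \<le> R" unfolding R_def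
      using that F_mono by (intro liminf_mono_ev[of a0] mu_mono_ord) auto
    finally show ?thesis .
  qed
  have part1: "ord_mu \<beta> L \<le> R"
  proof (cases "\<exists>a0<lam. \<beta> \<le> phi a0")
    case True
    then obtain a0 where a0: "a0 < lam" "\<beta> \<le> phi a0" by blast
    show ?thesis
      by (rule B[OF a0(1)]) (meson a0(2) monoD[OF phi_mono] order_trans)
  next
    case False
    then have lt: "\<And>a. a < lam \<Longrightarrow> phi a < \<beta>" by (meson not_le)
    have nb: "\<beta> \<noteq> bot" using lt[OF lamb] by auto
    have ns: "\<not> is_succ \<beta>"
    proof
      assume "is_succ \<beta>"
      then obtain b where b: "b < \<beta>" "\<forall>c<\<beta>. c \<le> b" unfolding is_succ_def by blast
      have "(SUP a\<in>{..<lam}. phi a) \<le> b" using b lt by (intro SUP_least) auto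
      then have "\<beta> \<le> b" using betaeq by simp
      then show False using b(1) by simp
    qed
    have "ord_mu \<beta> L = (SUP d\<in>{..<\<beta>}. ord_mu d L)"
      using nb ns F_mono unfolding L_def by (intro mu_limit) auto
    also have "\<dots> \<le> R"
    proof (rule SUP_least)
      fix d assume "d \<in> {..<\<beta>}"
      then have "d < (SUP a\<in>{..<lam}. phi a)" using betaeq by simp
      then obtain a0 where "a0 < lam" "d < phi a0" by (auto simp: less_SUP_iff)
      then show "ord_mu d L \<le> R"
      proof (intro B[of a0])
        fix a assume "a0 \<le> a"
        then have "phi a0 \<le> phi a" using monoD[OF phi_mono] by blast
        then show "d \<le> phi a" using \<open>d < phi a0\<close> by simp
      qed
    qed
    finally show ?thesis .
  qed
  moreover have "ord_mu (phi lam) L \<le> R" if "\<forall>l. nonzero_limit l \<longrightarrow> phi l \<le> ord_liminf l phi"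
  proof -
    have "phi lam \<le> \<beta>" using that lim unfolding \<beta>_def by blast
    then have "ord_mu (phi lam) L \<le> ord_mu \<beta> L" using F_mono unfolding L_def by (intro mu_mono_ord) auto
    then show ?thesis using part1 by simp
  qed
  ultimately show ?thesis unfolding L_def R_def \<beta>_def by blast
qed

end
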